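(* Let $m,p,n$ be positive integers with $p\mid m$. The codimension atoms of $G(m,p,n)$ are exactly the reflections in $G(m,p,n)$ together with the $p$-connected elements of $G(m,p,n)$, excluding those $p$-connected elements $g$ with $\operatorname{codim}(g)=2$ and $\det(g)=1$.
   Context: $\zeta_m=e^{2\pi i/m}$. $G(m,1,n)$ is the group of $n\times n$ monomial matrices whose nonzero entries are $m$-th roots of unity, acting on $V=\mathbb{C}^n$; for $p\mid m$, $G(m,p,n)$ is the subgroup of elements whose nonzero entries multiply to an $(m/p)$-th root of unity. A reflection is an element of finite order fixing a hyperplane pointwise. $\operatorname{codim}(g)=n-\dim\{v\in V:gv=v\}$; the codimension order is $a\le_\perp c$ iff $\operatorname{codim}(a)+\operatorname{codim}(a^{-1}c)=\operatorname{codim}(c)$, and a codimension atom is an element covering the identity in this poset. A diagonal matrix $g\ne 1$ whose non-1 eigenvalues (with multiplicity) are $\zeta_m^{c_1},\dots,\zeta_m^{c_k}$ is $p$-connected if $p\mid c_1+\dots+c_k$ but $p\nmid\sum_{i\in I}c_i$ for every nonempty proper subset $I\subsetneq\{1,\dots,k\}$. *)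

theory Defs
  imports "HOL-Analysis.Analysis"
begin

text \<open>n is encoded as CARD('n) for a finite index type 'n; matrices are complex^'n^'n acting on V = complex^'n.\<close>

definition zeta :: "nat \<Rightarrow> complex" where
  "zeta m = cis (2 * pi / real m)"

text \<open>G(m,p,n): monomial matrices with m-th roots of unity as nonzero entries,
  whose nonzero entries multiply to an (m/p)-th root of unity.\<close>
definition Gmpn :: "nat \<Rightarrow> nat \<Rightarrow> (complex^'n^'n) set" where
  "Gmpn m p = {g. \<exists>\<sigma> c. \<sigma> permutes (UNIV :: 'n set) \<and>
      (\<forall>i j. g $ i $ j = (if i = \<sigma> j then c j else 0)) \<and>
      (\<forall>j. c j ^ m = 1) \<and>
      (\<Prod>j\<in>UNIV. c j) ^ (m div p) = 1}"

definition fixed_space :: "complex^'n^'n \<Rightarrow> (complex^'n) set" where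
  "fixed_space g = {v. g *v v = v}"

definition codim :: "complex^'n^'n \<Rightarrow> nat" where
  "codim g = CARD('n) - vec.dim (fixed_space g)"

text \<open>Codimension order a \<le>\<perp> c.\<close>
definition codim_le :: "complex^'n^'n \<Rightarrow> complex^'n^'n \<Rightarrow> bool" where
  "codim_le a c \<longleftrightarrow> codim a + codim (matrix_inv a ** c) = codim c"

text \<open>Codimension atom of a group W: an element covering the identity in (W, \<le>\<perp>).\<close>
definition codim_atom :: "(complex^'n^'n) set \<Rightarrow> complex^'n^'n \<Rightarrow> bool" where
  "codim_atom W a \<longleftrightarrow> a \<in> W \<and> a \<noteq> mat 1 \<and> codim_le (mat 1) a \<and>
     (\<forall>b\<in>W. codim_le (mat 1) b \<and> codim_le b a \<longrightarrow> b = mat 1 \<or> b = a)"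

text \<open>Reflection: finite order element fixing a hyperplane pointwise (non-identity).\<close>
definition reflection :: "complex^'n^'n \<Rightarrow> bool" where
  "reflection g \<longleftrightarrow> (\<exists>k>0. ((**) g ^^ k) (mat 1) = mat 1) \<and>
     (\<exists>H. vec.subspace H \<and> vec.dim H + 1 = CARD('n) \<and> (\<forall>v\<in>H. g *v v = v)) \<and>
     g \<noteq> mat 1"

definition diagonal :: "complex^'n^'n \<Rightarrow> bool" where
  "diagonal g \<longleftrightarrow> (\<forall>i j. i \<noteq> j \<longrightarrow> g $ i $ j = 0)"

text \<open>p-connected diagonal element: non-1 eigenvalues (diagonal entries, with multiplicity,
  indexed by their positions S) are zeta_m^(c_i), p divides the total sum but no nonempty
  proper partial sum.\<close>
definition p_connected :: "nat \<Rightarrow> nat \<Rightarrow> complex^'n^'n \<Rightarrow> bool" where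
  "p_connected m p g \<longleftrightarrow> diagonal g \<and> g \<noteq> mat 1 \<and>
     (let S = {i. g $ i $ i \<noteq> 1} in
       \<exists>c :: 'n \<Rightarrow> nat. (\<forall>i\<in>S. g $ i $ i = zeta m ^ c i) \<and>
         p dvd (\<Sum>i\<in>S. c i) \<and>
         (\<forall>I. I \<noteq> {} \<and> I \<subset> S \<longrightarrow> \<not> p dvd (\<Sum>i\<in>I. c i)))"

end

theory Submission
  imports Defs
begin


definition monom :: "('n::finite \<Rightarrow> 'n) \<Rightarrow> ('n \<Rightarrow> complex) \<Rightarrow> complex^'n^'n" where
  "monom \<sigma> c = (\<chi> i j. if i = \<sigma> j then c j else 0)"

lemma monom_nth[simp]: "monom \<sigma> c $ i $ j = (if i = \<sigma> j then c j else 0)"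
  by (simp add: monom_def)

lemma monom_mult: "monom \<sigma> c ** monom \<tau> e = monom (\<sigma> \<circ> \<tau>) (\<lambda>j. c (\<tau> j) * e j)"
proof -
  have "(\<Sum>k\<in>UNIV. (if i = \<sigma> k then c k else 0) * (if k = \<tau> j then e j else 0))
      = (if i = \<sigma> (\<tau> j) then c (\<tau> j) * e j else 0)" for i j
  proof -
    have "(\<Sum>k\<in>UNIV. (if i = \<sigma> k then c k else 0) * (if k = \<tau> j then e j else 0))
      = (\<Sum>k\<in>UNIV. if k = \<tau> j then (if i = \<sigma> k then c k else 0) * e j else 0)"
      by (rule sum.cong) auto
    also have "\<dots> = (if i = \<sigma> (\<tau> j) then c (\<tau> j) * e j else 0)" by simp
    finally show ?thesis .
  qed
  then show ?thesis by (simp add: vec_eq_iff matrix_matrix_mult_def)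
qed

lemma monom_vec: assumes "inj \<sigma>" shows "(monom \<sigma> c *v v) $ \<sigma> j = c j * v $ j"
proof -
  have "(\<Sum>k\<in>UNIV. (if \<sigma> j = \<sigma> k then c k else 0) * v $ k)
      = (\<Sum>k\<in>UNIV. if k = j then c k * v $ k else 0)"
    by (rule sum.cong) (auto simp: inj_eq[OF assms])
  then show ?thesis by (simp add: matrix_vector_mult_def)
qed

lemma mat1_monom: "mat 1 = monom id (\<lambda>_. 1)"
  by (simp add: vec_eq_iff mat_def)

lemma subspace_fixed: "vec.subspace (fixed_space g)"
  unfolding vec.subspace_def fixed_space_def
  by (auto simp: matrix_vector_right_distrib vec.scale)



lemma dimF_le: "vec.dim (S::(complex^'n) set) \<le> CARD('n)"
  by (rule dim_subset_UNIV_cart_gen)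

lemma fixed_mat1: "fixed_space (mat 1 :: complex^'n^'n) = UNIV"
  by (auto simp: fixed_space_def)

lemma codim_mat1[simp]: "codim (mat 1 :: complex^'n^'n) = 0"
  by (simp add: codim_def fixed_mat1 card_cart_basis)

lemma codim0: assumes "codim (g::complex^'n^'n) = 0" shows "g = mat 1"
proof -
  have "vec.dim (fixed_space g) \<ge> vec.dim (UNIV :: (complex^'n) set)"
    using assms by (simp add: codim_def card_cart_basis)
  then have "fixed_space g = UNIV"
    using vec.subspace_dim_equal[OF subspace_fixed vec.subspace_UNIV] by blast
  then have "\<forall>v. g *v v = mat 1 *v v" by (auto simp: fixed_space_def)
  then show ?thesis by (simp add: matrix_eq)
qed

lemma codim_mult: "codim ((x::complex^'n^'n) ** y) \<le> codim x + codim y"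
proof -
  let ?S = "{a + b |a b. a \<in> fixed_space x \<and> b \<in> fixed_space y}"
  have sI: "vec.dim ?S + vec.dim (fixed_space x \<inter> fixed_space y) = vec.dim (fixed_space x) + vec.dim (fixed_space y)"
    by (rule vec.dim_sums_Int[OF subspace_fixed subspace_fixed])
  have "fixed_space x \<inter> fixed_space y \<subseteq> fixed_space (x ** y)"
    by (auto simp: fixed_space_def matrix_vector_mul_assoc[symmetric])
  then have "vec.dim (fixed_space x \<inter> fixed_space y) \<le> vec.dim (fixed_space (x ** y))"
    by (rule vec.dim_subset)
  moreover have "vec.dim ?S \<le> CARD('n)" by (rule dimF_le)
  moreover have "vec.dim (fixed_space x) \<le> CARD('n)" "vec.dim (fixed_space y) \<le> CARD('n)"
    "vec.dim (fixed_space (x**y)) \<le> CARD('n)" by (rule dimF_le)+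
  ultimately show ?thesis using sI by (simp add: codim_def)
qed

lemma codim_decomp:
  assumes "b ** h = (g::complex^'n^'n)" "codim b + codim h = codim g"
  shows "fixed_space b \<inter> fixed_space h = fixed_space g"
    and "\<exists>x y. x \<in> fixed_space b \<and> y \<in> fixed_space h \<and> v = x + y"
proof -
  let ?S = "{u + w |u w. u \<in> fixed_space b \<and> w \<in> fixed_space h}"
  have sI: "vec.dim ?S + vec.dim (fixed_space b \<inter> fixed_space h) = vec.dim (fixed_space b) + vec.dim (fixed_space h)"
    by (rule vec.dim_sums_Int[OF subspace_fixed subspace_fixed])
  have sub: "fixed_space b \<inter> fixed_space h \<subseteq> fixed_space g"
    using assms(1) by (auto simp: fixed_space_def matrix_vector_mul_assoc[symmetric])
  have le: "vec.dim ?S \<le> CARD('n)" "vec.dim (fixed_space b) \<le> CARD('n)" "vec.dim (fixed_space h) \<le> CARD('n)"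
    "vec.dim (fixed_space g) \<le> CARD('n)" by (rule dimF_le)+
  have d1: "vec.dim (fixed_space g) \<le> vec.dim (fixed_space b \<inter> fixed_space h)"
    using sI le assms(2) by (simp add: codim_def)
  show eq: "fixed_space b \<inter> fixed_space h = fixed_space g"
    by (rule vec.subspace_dim_equal[OF vec.subspace_inter[OF subspace_fixed subspace_fixed] subspace_fixed sub d1])
  have "vec.dim ?S \<ge> vec.dim (UNIV :: (complex^'n) set)"
    using sI le assms(2) eq by (simp add: codim_def card_cart_basis)
  then have "?S = UNIV"
    using vec.subspace_dim_equal[OF vec.subspace_sums[OF subspace_fixed subspace_fixed] vec.subspace_UNIV] by blast
  then show "\<exists>x y. x \<in> fixed_space b \<and> y \<in> fixed_space h \<and> v = x + y" by blast
qed

lemma codim_diag: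
  assumes "diagonal (g::complex^'n^'n)"
  shows "codim g = card {i. g$i$i \<noteq> 1}"
proof -
  have gv: "(g *v v) $ i = g$i$i * v$i" for v i
  proof -
    have "(\<Sum>k\<in>UNIV. g$i$k * v$k) = (\<Sum>k\<in>UNIV. if k = i then g$i$k * v$k else 0)"
      by (rule sum.cong) (use assms in \<open>auto simp: diagonal_def\<close>)
    then show ?thesis by (simp add: matrix_vector_mult_def)
  qed
  have e: "fixed_space g = {x. \<forall>i. i \<notin> {i. g$i$i = 1} \<longrightarrow> x$i = 0}"
    by (auto simp: fixed_space_def vec_eq_iff gv)
  have "vec.dim {x::complex^'n. \<forall>i. i \<notin> {i. g$i$i = 1} \<longrightarrow> x$i = 0} = card {i. g$i$i = 1}"
    by (rule dim_substandard_cart)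
  then have "vec.dim (fixed_space g) = card {i. g$i$i = 1}"
    by (subst e)
  moreover have "card {i. g$i$i \<noteq> 1} = CARD('n) - card {i. g$i$i = 1}"
  proof -
    have "{i. g$i$i \<noteq> 1} = UNIV - {i. g$i$i = 1}" by auto
    then show ?thesis by (simp add: card_Diff_subset)
  qed
  ultimately show ?thesis by (simp add: codim_def)
qed



lemma Gmpn_iff: "g \<in> Gmpn m p \<longleftrightarrow> (\<exists>\<sigma> c. \<sigma> permutes (UNIV::'n set) \<and> g = monom \<sigma> c \<and>
      (\<forall>j. c j ^ m = 1) \<and> (\<Prod>j\<in>UNIV. c j) ^ (m div p) = 1)"
  for g :: "complex^'n^'n"
  by (auto simp: Gmpn_def vec_eq_iff)

lemma matinv: assumes "(A::complex^'n^'n) ** B = mat 1"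
  shows "matrix_inv A ** A = mat 1" "A ** matrix_inv A = mat 1"
proof -
  have "B ** A = mat 1" using assms matrix_left_right_inverse by blast
  then have "A ** matrix_inv A = mat 1 \<and> matrix_inv A ** A = mat 1"
    unfolding matrix_inv_def using assms by (rule someI[where x=B, OF conjI[rotated]])
  then show "matrix_inv A ** A = mat 1" "A ** matrix_inv A = mat 1" by auto
qed

lemma matinv_app: assumes "(A::complex^'n^'n) ** B = mat 1" "A ** y = a"
  shows "matrix_inv A ** a = y"
proof -
  have "matrix_inv A ** a = (matrix_inv A ** A) ** y" by (metis assms(2) matrix_mul_assoc)
  then show ?thesis using matinv(1)[OF assms(1)] by simp
qed

lemma monom_inv:
  assumes "\<sigma> permutes (UNIV::'n::finite set)" "\<forall>j. c j \<noteq> 0"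
  shows "monom \<sigma> c ** monom (inv \<sigma>) (\<lambda>j. inverse (c (inv \<sigma> j))) = mat 1"
proof -
  have "\<sigma> \<circ> inv \<sigma> = id" using assms(1) permutes_inverses(1) by fastforce
  then show ?thesis using assms(2) by (simp add: monom_mult mat1_monom)
qed

lemma G_inv: assumes "g \<in> Gmpn m p" "0 < m" obtains gi where "(g::complex^'n^'n) ** gi = mat 1"
proof -
  obtain \<sigma> c where s: "\<sigma> permutes UNIV" "g = monom \<sigma> c" "\<forall>j. c j ^ m = 1"
    using assms(1) Gmpn_iff by blast
  have "\<forall>j. c j \<noteq> 0" using s(3) assms(2) by (metis power_0_left zero_neq_one neq0_conv)
  then show ?thesis using monom_inv[OF s(1)] s(2) that by blast
qed

definition rootmats :: "nat \<Rightarrow> (complex^'n^'n) set" where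
  "rootmats m = {A. \<exists>\<sigma> c. A = monom \<sigma> c \<and> (\<forall>j. c j ^ m = 1)}"

lemma finite_rootmats: assumes "0 < m" shows "finite (rootmats m :: (complex^'n^'n) set)"
proof -
  let ?R = "insert 0 {z::complex. z ^ m = 1}"
  have fR: "finite ?R" using assms by (simp add: finite_roots_unity)
  let ?Q = "{A::complex^'n^'n. \<forall>i j. A$i$j \<in> ?R}"
  let ?f = "\<lambda>A::complex^'n^'n. (\<lambda>ij::'n\<times>'n. A$(fst ij)$(snd ij))"
  have "?f ` ?Q \<subseteq> PiE UNIV (\<lambda>_. ?R)" by (auto simp: PiE_UNIV_domain)
  moreover have "finite (PiE (UNIV::('n\<times>'n) set) (\<lambda>_. ?R))" by (rule finite_PiE) (use fR in auto)
  ultimately have "finite (?f ` ?Q)" by (rule finite_subset)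
  moreover have "inj_on ?f ?Q"
    by (auto simp: inj_on_def vec_eq_iff fun_eq_iff)
  ultimately have "finite ?Q" using finite_image_iff by blast
  moreover have "rootmats m \<subseteq> ?Q" by (auto simp: rootmats_def)
  ultimately show ?thesis by (rule finite_subset[rotated])
qed

lemma rootmats_mult: assumes "A \<in> rootmats m" "B \<in> rootmats m" shows "A ** B \<in> rootmats m"
proof -
  obtain \<sigma> c \<tau> e where h: "A = monom \<sigma> c" "\<forall>j. c j ^ m = 1" "B = monom \<tau> e" "\<forall>j. e j ^ m = 1"
    using assms unfolding rootmats_def by blast
  have "A ** B = monom (\<sigma> \<circ> \<tau>) (\<lambda>j. c (\<tau> j) * e j)" using h by (simp add: monom_mult)
  moreover have "\<forall>j. (c (\<tau> j) * e j) ^ m = 1" using h by (simp add: power_mult_distrib)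
  ultimately show ?thesis unfolding rootmats_def by blast
qed

lemma pow_mult: "((**) g ^^ (k + a)) (mat 1) = ((**) g ^^ k) (mat 1) ** ((**) g ^^ a) (mat 1)"
  for g :: "complex^'n^'n"
  by (induction k) (simp_all add: matrix_mul_assoc)

lemma finite_order:
  assumes "g \<in> Gmpn m p" "0 < m"
  shows "\<exists>k>0. ((**) g ^^ k) (mat 1) = (mat 1 :: complex^'n^'n)"
proof -
  let ?P = "\<lambda>k. ((**) g ^^ k) (mat 1)"
  obtain gi where gi: "g ** gi = mat 1" using G_inv assms by blast
  have gR: "g \<in> rootmats m" using assms(1) by (auto simp: Gmpn_iff rootmats_def)
  have PR: "?P k \<in> rootmats m" for k
  proof (induction k)
    case 0 show ?case unfolding rootmats_def mat1_monom
      by (rule CollectI, rule exI[of _ id], rule exI[of _ "\<lambda>_. 1"]) simp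
  next
    case (Suc k) then show ?case using rootmats_mult[OF gR] by simp
  qed
  have inv: "invertible (?P k)" for k
  proof (induction k)
    case 0 show ?case by (simp add: invertible_def)
  next
    case (Suc k)
    have "invertible g" using gi invertible_right_inverse by blast
    then show ?case using Suc invertible_mult by simp
  qed
  have "range ?P \<subseteq> rootmats m" using PR by auto
  then have "finite (range ?P)" by (rule finite_subset) (rule finite_rootmats[OF assms(2)])
  then have "\<not> inj ?P" using finite_imageD[of ?P UNIV] infinite_UNIV_nat by auto
  then obtain a b where ab: "a \<noteq> b" "?P a = ?P b" unfolding inj_on_def by auto
  obtain a b where ab: "a < b" "?P a = ?P b"
    using ab by (metis linorder_neqE_nat)
  have "?P (b - a) ** ?P a = ?P a" using pow_mult[where g=g and k="b - a" and a=a] ab by simp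
  then have "?P (b - a) = mat 1"
  proof -
    assume h: "?P (b - a) ** ?P a = ?P a"
    obtain Q where Q: "?P a ** Q = mat 1" using inv[of a] invertible_def by blast
    have "?P (b - a) = ?P (b - a) ** (?P a ** Q)" using Q by simp
    also have "\<dots> = ?P a ** Q" using h by (simp add: matrix_mul_assoc)
    finally show ?thesis using Q by simp
  qed
  then show ?thesis using ab(1) by (intro exI[of _ "b - a"]) simp
qed



lemma zeta_pow_exp: "0 < m \<Longrightarrow> zeta m ^ j = exp(2 * of_real pi * \<i> * of_nat j / of_nat m)"
proof -
  assume m: "0 < m"
  have "zeta m ^ j = cis (real j * (2*pi/real m))" unfolding zeta_def by (rule Complex.DeMoivre)
  also have "\<dots> = exp (\<i> * complex_of_real (real j * (2*pi/real m)))" by (rule cis_conv_exp)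
  also have "\<i> * complex_of_real (real j * (2*pi/real m)) = 2 * of_real pi * \<i> * of_nat j / of_nat m"
    using m by (simp add: field_simps)
  finally show ?thesis .
qed

lemma zeta_pow_eq1: "0 < m \<Longrightarrow> zeta m ^ N = 1 \<longleftrightarrow> m dvd N"
  using complex_root_unity_eq_1[of m N] by (simp add: zeta_pow_exp)

lemma root_zeta: assumes "0 < m" "(z::complex) ^ m = 1" shows "\<exists>k. z = zeta m ^ k"
proof -
  have "z \<in> {exp(2 * of_real pi * \<i> * of_nat j / of_nat m) | j. j < m}"
    using complex_roots_unity[of m] assms by auto
  then show ?thesis using zeta_pow_exp[OF assms(1)] by auto
qed

lemma zeta_p: assumes "0 < m" "0 < p" "p dvd m"
  shows "(zeta m ^ s) ^ (m div p) = 1 \<longleftrightarrow> p dvd s"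
proof -
  obtain q where q: "m = p * q" using assms(3) by blast
  have qp: "0 < q" using q assms(1) by simp
  have "m div p = q" using q assms(2) by simp
  then have "(zeta m ^ s) ^ (m div p) = zeta m ^ (s * q)" by (simp add: power_mult)
  then have "(zeta m ^ s) ^ (m div p) = 1 \<longleftrightarrow> m dvd s * q"
    using zeta_pow_eq1[OF assms(1), of "s * q"] by simp
  then have "(zeta m ^ s) ^ (m div p) = 1 \<longleftrightarrow> p * q dvd s * q" using q by simp
  also have "\<dots> \<longleftrightarrow> p dvd s" using qp by simp
  finally show ?thesis .
qed

lemma zeta_ne0: "zeta m \<noteq> 0" by (simp add: zeta_def)



lemma monom_axis: "monom \<sigma> c *v axis j 1 = c j *s axis (\<sigma> j) 1"
proof -
  have "(\<Sum>l\<in>UNIV. (if i = \<sigma> l then c l else 0) * (if l = j then 1 else 0))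
      = (\<Sum>l\<in>UNIV. if l = j then (if i = \<sigma> l then c l else 0) else 0)" for i
    by (rule sum.cong) auto
  then show ?thesis by (simp add: vec_eq_iff matrix_vector_mult_def axis_def)
qed

lemma fixed_monom:
  assumes "\<sigma> permutes (UNIV::'n::finite set)"
  shows "v \<in> fixed_space (monom \<sigma> c) \<longleftrightarrow> (\<forall>l. v $ \<sigma> l = c l * v $ l)"
proof -
  have inj: "inj \<sigma>" using assms permutes_inj by blast
  have surj: "\<And>i. \<exists>l. i = \<sigma> l" using assms permutes_surj by (metis surj_def)
  have "v \<in> fixed_space (monom \<sigma> c) \<longleftrightarrow> (\<forall>i. (monom \<sigma> c *v v) $ i = v $ i)"
    by (simp add: fixed_space_def vec_eq_iff)
  also have "\<dots> \<longleftrightarrow> (\<forall>l. (monom \<sigma> c *v v) $ \<sigma> l = v $ \<sigma> l)"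
  proof -
    have g: "(\<forall>i. Q i) \<longleftrightarrow> (\<forall>l. Q (\<sigma> l))" for Q using surj by metis
    show ?thesis by (rule g)
  qed
  also have "\<dots> \<longleftrightarrow> (\<forall>l. c l * v $ l = v $ \<sigma> l)"
    by (simp add: monom_vec[OF inj])
  also have "\<dots> \<longleftrightarrow> (\<forall>l. v $ \<sigma> l = c l * v $ l)"
    by (intro iff_allI) (rule eq_commute)
  finally show ?thesis .
qed

lemma tr_codim:
  fixes j k :: "'n::finite"
  assumes jk: "j \<noteq> k" and e1: "\<forall>l. l \<noteq> j \<and> l \<noteq> k \<longrightarrow> e l = 1" and e2: "e j * e k = 1"
  shows "codim (monom (Transposition.transpose j k) e) \<le> 1"
proof -
  let ?t = "Transposition.transpose j k"
  have tp: "?t permutes UNIV" by (rule permutes_swap_id) auto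
  let ?d = "UNIV - {j, k}"
  let ?Z = "{x::complex^'n. \<forall>i. i \<notin> ?d \<longrightarrow> x$i = 0}"
  have dZ: "vec.dim ?Z = card ?d" by (rule dim_substandard_cart)
  have c2: "card {j, k} = 2" using jk by simp
  have "card {j,k} \<le> CARD('n)" by (rule card_mono) auto
  then have cd: "card ?d = CARD('n) - 2" using c2 by (simp add: card_Diff_subset)
  have n2: "2 \<le> CARD('n)" using \<open>card {j,k} \<le> CARD('n)\<close> c2 by simp
  let ?u = "axis j 1 + e j *s axis k 1 :: complex^'n"
  have sZ: "vec.subspace ?Z" by (rule subspace_substandard_cart)
  have uZ: "?u \<notin> vec.span ?Z"
  proof
    assume a: "?u \<in> vec.span ?Z"
    have spZ: "vec.span ?Z = ?Z" using sZ by simp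
    from a have "?u \<in> ?Z" unfolding spZ .
    then show False using jk by (simp add: axis_def) blast
  qed
  have "vec.dim (insert ?u ?Z) = card ?d + 1" using uZ dZ by (simp add: vec.dim_insert)
  moreover have "insert ?u ?Z \<subseteq> fixed_space (monom ?t e)"
  proof -
    have "?Z \<subseteq> fixed_space (monom ?t e)"
    proof
      fix x assume x: "x \<in> ?Z"
      show "x \<in> fixed_space (monom ?t e)" unfolding fixed_monom[OF tp]
      proof
        fix l show "x $ ?t l = e l * x $ l"
          using x e1 by (cases "l = j"; cases "l = k") (auto simp: Transposition.transpose_def)
      qed
    qed
    moreover have "?u \<in> fixed_space (monom ?t e)" unfolding fixed_monom[OF tp]
    proof
      fix l show "?u $ ?t l = e l * ?u $ l"
      proof -
        have e2': "e k * e j = 1" using e2 by (simp add: mult.commute)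
        show ?thesis
          using e1 e2' jk by (cases "l = j"; cases "l = k") (simp_all add: Transposition.transpose_def axis_def)
      qed
    qed
    ultimately show ?thesis by blast
  qed
  then have "vec.dim (insert ?u ?Z) \<le> vec.dim (fixed_space (monom ?t e))" by (rule vec.dim_subset)
  ultimately show ?thesis using cd n2 by (simp add: codim_def)
qed



lemma inv_mat1_mult: "matrix_inv (mat 1) ** (b::complex^'n^'n) = b"
  by (rule matinv_app) simp_all

lemma codim_le_1: "codim_le (mat 1) (b::complex^'n^'n)"
  unfolding codim_le_def inv_mat1_mult by simp

lemma refl_codim1: assumes "reflection (g::complex^'n^'n)" shows "codim g = 1"
proof -
  obtain H where H: "vec.subspace H" "vec.dim H + 1 = CARD('n)" "\<forall>v\<in>H. g *v v = v"
    using assms unfolding reflection_def by blast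
  have "H \<subseteq> fixed_space g" using H(3) by (auto simp: fixed_space_def)
  then have "vec.dim H \<le> vec.dim (fixed_space g)" by (rule vec.dim_subset)
  then have "codim g \<le> 1" using H(2) by (simp add: codim_def)
  moreover have "codim g \<noteq> 0" using codim0 assms unfolding reflection_def by blast
  ultimately show ?thesis by simp
qed

lemma codim1_refl:
  assumes "g \<in> Gmpn m p" "0 < m" "codim (g::complex^'n^'n) = 1"
  shows "reflection g"
  unfolding reflection_def
proof (intro conjI)
  show "\<exists>k>0. ((**) g ^^ k) (mat 1) = mat 1" by (rule finite_order[OF assms(1,2)])
  have "vec.dim (fixed_space g) \<le> CARD('n)" by (rule dimF_le)
  then have "vec.dim (fixed_space g) + 1 = CARD('n)" using assms(3) by (simp add: codim_def)
  then show "\<exists>H. vec.subspace H \<and> vec.dim H + 1 = CARD('n) \<and> (\<forall>v\<in>H. g *v v = v)"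
    using subspace_fixed[of g] by (auto simp: fixed_space_def)
  show "g \<noteq> mat 1" using assms(3) by auto
qed

lemma atom_codim1:
  assumes "g \<in> Gmpn m p" "0 < m" "codim (g::complex^'n^'n) = 1"
  shows "codim_atom (Gmpn m p) g"
  unfolding codim_atom_def
proof (intro conjI ballI impI)
  show "g \<in> Gmpn m p" by fact
  show "g \<noteq> mat 1" using assms(3) by auto
  show "codim_le (mat 1) g" by (rule codim_le_1)
  fix b assume b: "b \<in> Gmpn m p" and le: "codim_le (mat 1) b \<and> codim_le b g"
  obtain bi where bi: "b ** bi = mat 1" using G_inv[OF b assms(2)] by blast
  have "codim b + codim (matrix_inv b ** g) = 1" using le assms(3) by (simp add: codim_le_def)
  then consider "codim b = 0" | "codim (matrix_inv b ** g) = 0" by linarith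
  then show "b = mat 1 \<or> b = g"
  proof cases
    case 1 then show ?thesis using codim0 by blast
  next
    case 2
    then have "matrix_inv b ** g = mat 1" by (rule codim0)
    then have "b ** (matrix_inv b ** g) = b" by simp
    then have "g = b" using matinv(2)[OF bi] by (metis matrix_mul_assoc matrix_mul_lid)
    then show ?thesis by simp
  qed
qed



lemma prod2:
  fixes j k :: "'n::finite" assumes "j \<noteq> k"
  shows "(\<Prod>l\<in>UNIV. (if l = j then x else if l = k then y else 1)) = (x * y :: complex)"
proof -
  have "(\<Prod>l\<in>UNIV. (if l = j then x else if l = k then y else 1))
      = (\<Prod>l\<in>{j,k}. (if l = j then x else if l = k then y else 1))"
    by (rule prod.mono_neutral_right) auto
  also have "\<dots> = x * y" using assms by simp
  finally show ?thesis .
qed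

lemma prod_supp:
  fixes f :: "'n::finite \<Rightarrow> complex"
  assumes "\<forall>l. l \<notin> S \<longrightarrow> f l = 1"
  shows "(\<Prod>l\<in>UNIV. f l) = (\<Prod>l\<in>S. f l)"
  by (rule prod.mono_neutral_right) (use assms in auto)

lemma Gmpn_intro:
  assumes "\<sigma> permutes (UNIV::'n::finite set)" "\<forall>j. c j ^ m = 1" "(\<Prod>j\<in>UNIV. c j) ^ (m div p) = 1"
  shows "monom \<sigma> c \<in> Gmpn m p"
  unfolding Gmpn_iff using assms by blast

lemma not_atom:
  assumes "codim_atom W a" "b \<in> W" "codim_le b a" "b \<noteq> mat 1" "b \<noteq> a"
  shows False
  using assms codim_le_1[of b] unfolding codim_atom_def by blast

lemma nondiag:
  assumes aG: "a \<in> Gmpn m p" and m: "0 < m" and nd: "\<not> diagonal a" and c2: "2 \<le> codim (a::complex^'n^'n)"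
  shows "\<exists>b\<in>Gmpn m p. codim_le b a \<and> b \<noteq> mat 1 \<and> b \<noteq> a"
proof -
  obtain \<sigma> c where s: "\<sigma> permutes UNIV" "a = monom \<sigma> c" "\<forall>j. c j ^ m = 1"
    using aG Gmpn_iff by blast
  have cnz: "c l \<noteq> 0" for l using s(3) m by (metis power_0_left zero_neq_one neq0_conv)
  obtain i j where ij: "i \<noteq> j" "a $ i $ j \<noteq> 0" using nd unfolding diagonal_def by blast
  define k where "k = \<sigma> j"
  have jk: "j \<noteq> k" using ij s(2) by (auto simp: k_def)
  define e where "e = (\<lambda>l. if l = j then c j else if l = k then inverse (c j) else 1)"
  define \<tau> where "\<tau> = Transposition.transpose j k"
  define r where "r = monom \<tau> e"
  have tp: "\<tau> permutes UNIV" unfolding \<tau>_def by (rule permutes_swap_id) auto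
  have ejk: "e j * e k = 1" using jk cnz by (simp add: e_def)
  have e1: "\<forall>l. l \<noteq> j \<and> l \<noteq> k \<longrightarrow> e l = 1" by (simp add: e_def)
  have rG: "r \<in> Gmpn m p"
  proof -
    have "\<forall>l. e l ^ m = 1" using s(3) by (simp add: e_def power_inverse)
    moreover have "(\<Prod>l\<in>UNIV. e l) = 1" using prod2[OF jk, of "c j" "inverse (c j)"] cnz jk
      by (simp add: e_def)
    ultimately show ?thesis unfolding r_def using tp by (intro Gmpn_intro) auto
  qed
  have rr: "r ** r = mat 1"
  proof -
    have "\<forall>l. e (\<tau> l) * e l = 1"
    proof
      fix l show "e (\<tau> l) * e l = 1"
        using jk cnz by (cases "l = j"; cases "l = k") (simp_all add: e_def \<tau>_def)
    qed
    then show ?thesis by (simp add: r_def monom_mult \<tau>_def mat1_monom)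
  qed
  have cr: "codim r \<le> 1" unfolding r_def \<tau>_def by (rule tr_codim[OF jk e1 ejk])
  have fa_fr: "fixed_space a \<subseteq> fixed_space r"
  proof
    fix v assume "v \<in> fixed_space a"
    then have va: "\<forall>l. v $ \<sigma> l = c l * v $ l" using fixed_monom[OF s(1)] s(2) by simp
    then have vk: "v $ k = c j * v $ j" by (simp add: k_def)
    show "v \<in> fixed_space r" unfolding r_def fixed_monom[OF tp]
    proof
      fix l show "v $ \<tau> l = e l * v $ l"
        using jk cnz vk by (cases "l = j"; cases "l = k") (simp_all add: e_def \<tau>_def)
    qed
  qed
  have sub: "fixed_space a \<subseteq> fixed_space (r ** a)"
    using fa_fr by (auto simp: fixed_space_def matrix_vector_mul_assoc[symmetric])
  have ae: "a *v axis j 1 = c j *s axis k 1" using s(2) by (simp add: monom_axis k_def)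
  have re: "r *v axis k 1 = inverse (c j) *s axis j 1"
    using jk by (simp add: r_def monom_axis e_def \<tau>_def)
  have e_in: "axis j 1 \<in> fixed_space (r ** a)"
    using ae re cnz by (simp add: fixed_space_def matrix_vector_mul_assoc[symmetric] vec.scale)
  have e_out: "axis j 1 \<notin> fixed_space a"
  proof
    assume "axis j 1 \<in> fixed_space a"
    then have "c j *s axis k 1 = (axis j 1 :: complex^'n)" using ae by (simp add: fixed_space_def)
    then have "(c j *s axis k 1) $ j = (axis j 1 :: complex^'n) $ j" by simp
    then show False using jk by (simp add: axis_def)
  qed
  have spx: "vec.span (fixed_space x) = fixed_space x" for x :: "complex^'n^'n"
    using subspace_fixed[of x] by simp
  have "vec.span (fixed_space a) \<subset> vec.span (fixed_space (r ** a))"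
    unfolding spx using sub e_in e_out by blast
  then have "vec.dim (fixed_space a) < vec.dim (fixed_space (r ** a))" by (rule vec.dim_psubset)
  then have lt: "codim (r ** a) < codim a"
    using dimF_le[of "fixed_space a"] dimF_le[of "fixed_space (r**a)"] by (simp add: codim_def)
  have rra: "r ** (r ** a) = a" by (simp add: matrix_mul_assoc rr)
  have inv: "matrix_inv r ** a = r ** a" by (rule matinv_app[OF rr rra])
  have "codim a \<le> codim r + codim (r ** a)" using codim_mult[of r "r ** a"] rra by simp
  then have le: "codim_le r a" unfolding codim_le_def inv using cr lt by linarith
  have r1: "r \<noteq> mat 1"
  proof
    assume "r = mat 1"
    then have "r $ j $ j = 1" by (simp add: mat_def)
    moreover have "r $ j $ j = 0" using jk by (simp add: r_def \<tau>_def)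
    ultimately show False by simp
  qed
  have ra: "r \<noteq> a" using cr c2 by auto
  show ?thesis using rG le r1 ra by blast
qed



lemma diag_monom: "diagonal (monom id f)" by (simp add: diagonal_def)

lemma diag_G:
  assumes aG: "a \<in> Gmpn m p" and m: "0 < m" and dg: "diagonal (a::complex^'n^'n)"
  shows "a = monom id (\<lambda>l. a$l$l)" "\<forall>l. (a$l$l)^m = 1" "(\<Prod>l\<in>UNIV. a$l$l)^(m div p) = 1"
proof -
  obtain \<sigma> c where s: "\<sigma> permutes UNIV" "a = monom \<sigma> c" "\<forall>j. c j ^ m = 1"
     "(\<Prod>j\<in>UNIV. c j) ^ (m div p) = 1"
    using aG Gmpn_iff by blast
  have cnz: "c l \<noteq> 0" for l using s(3) m by (metis power_0_left zero_neq_one neq0_conv)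
  have sid: "\<sigma> l = l" for l
  proof (rule ccontr)
    assume "\<sigma> l \<noteq> l"
    then have "a $ \<sigma> l $ l = 0" using dg unfolding diagonal_def by blast
    then show False using s(2) cnz by simp
  qed
  have cl: "c l = a$l$l" for l using s(2) sid by simp
  show "a = monom id (\<lambda>l. a$l$l)" using s(2) sid by (simp add: vec_eq_iff)
  show "\<forall>l. (a$l$l)^m = 1" using s(3) cl by metis
  show "(\<Prod>l\<in>UNIV. a$l$l)^(m div p) = 1" using s(4) cl by simp
qed

lemma diag_split:
  assumes aG: "a \<in> Gmpn m p" and m: "0 < m" and dg: "diagonal (a::complex^'n^'n)"
    and IS: "I \<subseteq> {l. a$l$l \<noteq> 1}" "I \<noteq> {}" "I \<noteq> {l. a$l$l \<noteq> 1}"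
    and pr: "(\<Prod>l\<in>I. a$l$l)^(m div p) = 1"
  shows "\<exists>b\<in>Gmpn m p. codim_le b a \<and> b \<noteq> mat 1 \<and> b \<noteq> a"
proof -
  define d where "d = (\<lambda>l. a$l$l)"
  define S where "S = {l. d l \<noteq> 1}"
  have IS': "I \<subseteq> S" "I \<noteq> S" using IS by (auto simp: S_def d_def)
  note G = diag_G[OF aG m dg]
  define b where "b = monom id (\<lambda>l. if l \<in> I then d l else 1)"
  define h where "h = monom id (\<lambda>l. if l \<in> I then 1 else d l)"
  have f: "(\<lambda>j. (if j \<in> I then d (id j) else 1) * (if j \<in> I then 1 else d j)) = d"
    by (auto simp: fun_eq_iff)
  have "b ** h = monom id d" unfolding b_def h_def monom_mult by (simp add: vec_eq_iff)
  then have bh: "b ** h = a" using G(1) by (simp add: d_def)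
  have bG: "b \<in> Gmpn m p"
  proof -
    have "(\<Prod>l\<in>UNIV. (if l \<in> I then d l else 1)) = (\<Prod>l\<in>I. d l)"
      by (subst prod_supp[of I]) auto
    then show ?thesis unfolding b_def using G(2) pr
      by (intro Gmpn_intro) (auto simp: d_def)
  qed
  obtain bi where bi: "b ** bi = mat 1" using G_inv[OF bG m] by blast
  have inv: "matrix_inv b ** a = h" by (rule matinv_app[OF bi bh])
  have cb: "codim b = card I"
  proof -
    have "{l. b$l$l \<noteq> 1} = I" using IS' by (auto simp: b_def S_def)
    then show ?thesis using codim_diag[of b] by (simp add: b_def diag_monom)
  qed
  have ch: "codim h = card (S - I)"
  proof -
    have "{l. h$l$l \<noteq> 1} = S - I" by (auto simp: h_def S_def)
    then show ?thesis using codim_diag[of h] by (simp add: h_def diag_monom)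
  qed
  have ca: "codim a = card S" using codim_diag[OF dg] by (simp add: S_def d_def)
  have "card S = card I + card (S - I)" using IS'(1) card_Diff_subset[of I S]
    by (metis card_mono finite le_add_diff_inverse)
  then have le: "codim_le b a" unfolding codim_le_def inv using ca cb ch by simp
  obtain i where i: "i \<in> I" using IS'(1) IS(2) by blast
  have b1: "b \<noteq> mat 1"
  proof
    assume "b = mat 1"
    then have "b $ i $ i = 1" by (simp add: mat_def)
    then show False using i IS'(1) by (auto simp: b_def S_def)
  qed
  obtain i' where i': "i' \<in> S" "i' \<notin> I" using IS' by blast
  have ba: "b \<noteq> a"
  proof
    assume "b = a"
    then have "b $ i' $ i' = d i'" by (simp add: d_def)
    then show False using i' by (auto simp: b_def S_def)
  qed
  show ?thesis using bG le b1 ba by blast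
qed

lemma diag_excluded:
  assumes aG: "a \<in> Gmpn m p" and m: "0 < m" and dg: "diagonal (a::complex^'n^'n)"
    and S: "{l. a$l$l \<noteq> 1} = {i, j}" and ij: "i \<noteq> j" and dd: "a$i$i * a$j$j = 1"
  shows "\<exists>b\<in>Gmpn m p. codim_le b a \<and> b \<noteq> mat 1 \<and> b \<noteq> a"
proof -
  note G = diag_G[OF aG m dg]
  define \<tau> where "\<tau> = Transposition.transpose i j"
  have tp: "\<tau> permutes UNIV" unfolding \<tau>_def by (rule permutes_swap_id) auto
  define b where "b = monom \<tau> (\<lambda>_. 1)"
  have bG: "b \<in> Gmpn m p" unfolding b_def using tp by (intro Gmpn_intro) auto
  have bb: "b ** b = mat 1" by (simp add: b_def monom_mult \<tau>_def mat1_monom)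
  have ba: "b ** a = monom \<tau> (\<lambda>l. a$l$l)"
    by (subst G(1)) (simp add: b_def monom_mult)
  have bba: "b ** (b ** a) = a" by (simp add: matrix_mul_assoc bb)
  have inv: "matrix_inv b ** a = b ** a" by (rule matinv_app[OF bb bba])
  have cb: "codim b \<le> 1" unfolding b_def \<tau>_def by (rule tr_codim[OF ij]) auto
  have cba: "codim (b ** a) \<le> 1" unfolding ba \<tau>_def
    by (rule tr_codim[OF ij]) (use S dd in auto)
  have ca: "codim a = 2" using codim_diag[OF dg] S ij by simp
  have "codim a \<le> codim b + codim (b ** a)" using codim_mult[of b "b ** a"] bba by simp
  then have le: "codim_le b a" unfolding codim_le_def inv using ca cb cba by linarith
  have b1: "b \<noteq> mat 1"
  proof
    assume "b = mat 1"
    then have "b $ i $ i = 1" by (simp add: mat_def)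
    then show False using ij by (simp add: b_def \<tau>_def)
  qed
  have ba': "b \<noteq> a"
  proof
    assume "b = a"
    then have "b $ j $ i = 0" using dg ij unfolding diagonal_def by metis
    then show False using ij by (simp add: b_def \<tau>_def)
  qed
  show ?thesis using bG le b1 ba' by blast
qed



lemma atom_sub:
  assumes m: "0 < m" and p: "0 < p" "p dvd m" and at: "codim_atom (Gmpn m p) (a::complex^'n^'n)"
  shows "reflection a \<or> (p_connected m p a \<and> \<not> (codim a = 2 \<and> det a = 1))"
proof -
  have aG: "a \<in> Gmpn m p" and a1: "a \<noteq> mat 1" using at unfolding codim_atom_def by auto
  show ?thesis
  proof (cases "codim a = 1")
    case True then show ?thesis using codim1_refl[OF aG m] by blast
  next
    case False
    have "codim a \<noteq> 0" using codim0 a1 by blast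
    then have c2: "2 \<le> codim a" using False by linarith
    have dg: "diagonal a"
    proof (rule ccontr)
      assume "\<not> diagonal a"
      then obtain b where "b \<in> Gmpn m p" "codim_le b a" "b \<noteq> mat 1" "b \<noteq> a"
        using nondiag[OF aG m _ c2] by blast
      then show False using not_atom[OF at] by blast
    qed
    define d where "d = (\<lambda>l. a$l$l)"
    define S where "S = {l. d l \<noteq> 1}"
    note G = diag_G[OF aG m dg]
    define c where "c = (\<lambda>l. SOME k. d l = zeta m ^ k)"
    have hc: "d l = zeta m ^ c l" for l
    proof -
      have "\<exists>k. d l = zeta m ^ k" using root_zeta[OF m] G(2) by (simp add: d_def)
      then show ?thesis unfolding c_def by (rule someI_ex)
    qed
    have pI: "(\<Prod>l\<in>I. d l) = zeta m ^ (\<Sum>l\<in>I. c l)" for I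
      by (simp add: hc power_sum)
    have pU: "(\<Prod>l\<in>UNIV. d l) = (\<Prod>l\<in>S. d l)" by (rule prod_supp) (auto simp: S_def)
    have pS: "p dvd (\<Sum>l\<in>S. c l)"
    proof -
      have "(\<Prod>l\<in>UNIV. d l) ^ (m div p) = 1" using G(3) by (simp add: d_def)
      then have "(\<Prod>l\<in>S. d l) ^ (m div p) = 1" unfolding pU .
      then have "(zeta m ^ (\<Sum>l\<in>S. c l)) ^ (m div p) = 1" unfolding pI .
      then show ?thesis using zeta_p[OF m p] by simp
    qed
    have proper: "\<not> p dvd (\<Sum>l\<in>I. c l)" if I: "I \<noteq> {}" "I \<subset> S" for I
    proof
      assume "p dvd (\<Sum>l\<in>I. c l)"
      then have "(\<Prod>l\<in>I. a$l$l)^(m div p) = 1"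
        using zeta_p[OF m p] pI by (simp add: d_def)
      then obtain b where "b \<in> Gmpn m p" "codim_le b a" "b \<noteq> mat 1" "b \<noteq> a"
        using diag_split[OF aG m dg, of I] I by (auto simp: S_def d_def)
      then show False using not_atom[OF at] by blast
    qed
    have pc: "p_connected m p a"
      unfolding p_connected_def Let_def
    proof (intro conjI)
      show "diagonal a" by fact
      show "a \<noteq> mat 1" by fact
      show "\<exists>c. (\<forall>i\<in>{i. a $ i $ i \<noteq> 1}. a $ i $ i = zeta m ^ c i) \<and>
          p dvd sum c {i. a $ i $ i \<noteq> 1} \<and>
          (\<forall>I. I \<noteq> {} \<and> I \<subset> {i. a $ i $ i \<noteq> 1} \<longrightarrow> \<not> p dvd sum c I)"
        using hc pS proper unfolding S_def d_def by blast
    qed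
    have ex: "\<not> (codim a = 2 \<and> det a = 1)"
    proof
      assume h: "codim a = 2 \<and> det a = 1"
      then have "card S = 2" using codim_diag[OF dg] by (simp add: S_def d_def)
      then obtain i j where ij: "S = {i, j}" "i \<noteq> j" by (auto simp: card_2_iff)
      have "det a = (\<Prod>l\<in>UNIV. d l)" using det_diagonal[of a] dg
        unfolding diagonal_def d_def by blast
      then have "d i * d j = 1" using h pU ij by simp
      then obtain b where "b \<in> Gmpn m p" "codim_le b a" "b \<noteq> mat 1" "b \<noteq> a"
        using diag_excluded[OF aG m dg _ ij(2)] ij(1) by (auto simp: S_def d_def)
      then show False using not_atom[OF at] by blast
    qed
    show ?thesis using pc ex by blast
  qed
qed



lemma alg1: "x2 = bi*x1 \<Longrightarrow> x1 = bj*x2 \<Longrightarrow> bj*y2 = di*y1 \<Longrightarrow> x1 + y1 = 0 \<Longrightarrow> x2 + y2 = 1 \<Longrightarrow> bj*(1 - bi*bj) = (0::complex)"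
  by algebra
lemma alg2: "x2 = bi*x1 \<Longrightarrow> x1 = bj*x2 \<Longrightarrow> bi*y1 = dj*y2 \<Longrightarrow> bj*y2 = di*y1 \<Longrightarrow> x1 + y1 = 0 \<Longrightarrow> x2 + y2 = 1 \<Longrightarrow> bi*bj = 1 \<Longrightarrow> (1 - di*dj)*dj = (0::complex)"
  by algebra
lemma alg3: "xj = bi*xi \<Longrightarrow> xk = bj*xj \<Longrightarrow> bi*yi = dj*yj \<Longrightarrow> bj*yj = dk*yk \<Longrightarrow> xi + yi = 1 \<Longrightarrow> xj + yj = 0 \<Longrightarrow> xk + yk = 0 \<Longrightarrow> bi*bi*bj*(1 - dk) = (0::complex)"
  by algebra

lemma pconn_core:
  assumes m: "0 < m" and p: "0 < p" "p dvd m"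
    and gG: "g \<in> Gmpn m p" and dg: "diagonal (g::complex^'n^'n)"
    and hc: "\<forall>i\<in>{i. g$i$i \<noteq> 1}. g$i$i = zeta m ^ c i"
    and proper: "\<forall>I. I \<noteq> {} \<and> I \<subset> {i. g$i$i \<noteq> 1} \<longrightarrow> \<not> p dvd (\<Sum>i\<in>I. c i)"
    and ne: "\<not> (codim g = 2 \<and> det g = 1)"
    and bG: "b \<in> Gmpn m p" and le: "codim_le b g" and b1: "b \<noteq> mat 1" and bg: "b \<noteq> g"
  shows False
proof -
  define d where "d = (\<lambda>l. g$l$l)"
  define S where "S = {l. d l \<noteq> 1}"
  note G = diag_G[OF gG m dg]
  have gd: "g = monom id d" using G(1) by (simp add: d_def)
  have dnz: "d l \<noteq> 0" for l using G(2) m unfolding d_def by (metis power_0_left zero_neq_one neq0_conv)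
  obtain \<sigma> \<beta> where s: "\<sigma> permutes UNIV" "b = monom \<sigma> \<beta>" "\<forall>j. \<beta> j ^ m = 1"
     "(\<Prod>j\<in>UNIV. \<beta> j) ^ (m div p) = 1"
    using bG Gmpn_iff by blast
  have inj: "inj \<sigma>" using s(1) permutes_inj by blast
  have bnz: "\<beta> l \<noteq> 0" for l using s(3) m by (metis power_0_left zero_neq_one neq0_conv)
  obtain bi where bi: "b ** bi = mat 1" using G_inv[OF bG m] by blast
  define h where "h = matrix_inv b ** g"
  have bh: "b ** h = g" unfolding h_def using matinv(2)[OF bi] by (simp add: matrix_mul_assoc)
  have cc: "codim b + codim h = codim g" using le by (simp add: codim_le_def h_def)
  note dec = codim_decomp[OF bh cc]
  have Fb: "x \<in> fixed_space b \<Longrightarrow> x $ \<sigma> l = \<beta> l * x $ l" for x l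
    using fixed_monom[OF s(1)] s(2) by blast
  have Fh: "\<beta> l * y $ l = d (\<sigma> l) * y $ (\<sigma> l)" if y: "y \<in> fixed_space h" for y l
  proof -
    have "h *v y = y" using y by (simp add: fixed_space_def)
    then have "g *v y = b *v y" using bh by (metis matrix_vector_mul_assoc)
    then have "(g *v y) $ \<sigma> l = (b *v y) $ \<sigma> l" by simp
    moreover have "(g *v y) $ \<sigma> l = d (\<sigma> l) * y $ (\<sigma> l)"
      using monom_vec[of id d y "\<sigma> l"] gd by simp
    moreover have "(b *v y) $ \<sigma> l = \<beta> l * y $ l" using monom_vec[OF inj] s(2) by simp
    ultimately show ?thesis by simp
  qed
  have split: "\<exists>x y. x \<in> fixed_space b \<and> y \<in> fixed_space h \<and> v = x + y" for v
    by (rule dec(2))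
  \<comment> \<open>(a) outside S, b is the identity\<close>
  have outS: "\<sigma> j = j \<and> \<beta> j = 1" if j: "j \<notin> S" for j
  proof -
    have "g *v axis j 1 = axis j 1" using j gd by (simp add: monom_axis S_def)
    then have "axis j 1 \<in> fixed_space g" by (simp add: fixed_space_def)
    then have "axis j 1 \<in> fixed_space b" using dec(1) by blast
    then have e: "(axis j 1 :: complex^'n) $ \<sigma> j = \<beta> j * (axis j 1 :: complex^'n) $ j" by (rule Fb)
    have "\<sigma> j = j" using e bnz[of j] by (auto simp: axis_def split: if_splits)
    then show ?thesis using e by (simp add: axis_def)
  qed
  \<comment> \<open>(b) fixed points\<close>
  have fixpt: "\<beta> i = 1 \<or> \<beta> i = d i" if si: "\<sigma> i = i" for i
  proof (rule ccontr)
    assume a: "\<not> (\<beta> i = 1 \<or> \<beta> i = d i)"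
    obtain x y where xy: "x \<in> fixed_space b" "y \<in> fixed_space h" "axis i 1 = x + y"
      using split by blast
    have "x $ i = \<beta> i * x $ i" using Fb[OF xy(1), of i] si by simp
    then have x0: "x $ i = 0" using a by (metis mult_cancel_right1)
    have "\<beta> i * y $ i = d i * y $ i" using Fh[OF xy(2), of i] si by simp
    then have y0: "y $ i = 0" using a by simp
    have "(axis i 1 :: complex^'n) $ i = x $ i + y $ i" using xy(3) by simp
    then show False using x0 y0 by (simp add: axis_def)
  qed
  \<comment> \<open>(c) 2-cycles\<close>
  have twocyc: "\<beta> i * \<beta> j = 1 \<and> d i * d j = 1" if c: "\<sigma> i = j" "j \<noteq> i" "\<sigma> j = i" for i j
  proof -
    obtain x y where xy: "x \<in> fixed_space b" "y \<in> fixed_space h" "axis j 1 = x + y"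
      using split by blast
    have x1: "x $ j = \<beta> i * x $ i" using Fb[OF xy(1), of i] c by simp
    have x2: "x $ i = \<beta> j * x $ j" using Fb[OF xy(1), of j] c by simp
    have y1: "\<beta> i * y $ i = d j * y $ j" using Fh[OF xy(2), of i] c by simp
    have y2: "\<beta> j * y $ j = d i * y $ i" using Fh[OF xy(2), of j] c by simp
    have s1: "x $ i + y $ i = 0" using arg_cong[OF xy(3), of "\<lambda>v. v $ i"] c by (simp add: axis_def)
    have s2: "x $ j + y $ j = 1" using arg_cong[OF xy(3), of "\<lambda>v. v $ j"] by (simp add: axis_def)
    have "\<beta> j * (1 - \<beta> i * \<beta> j) = 0" by (rule alg1[OF x1 x2 y2 s1 s2])
    then have bb: "\<beta> i * \<beta> j = 1" using bnz[of j] by simp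
    have "(1 - d i * d j) * d j = 0" by (rule alg2[OF x1 x2 y1 y2 s1 s2 bb])
    then have "d i * d j = 1" using dnz[of j] by simp
    then show ?thesis using bb by simp
  qed
  \<comment> \<open>(d) longer cycles\<close>
  have nocyc3: False if c: "\<sigma> i = j" "j \<noteq> i" "\<sigma> j = k" "k \<noteq> i" "k \<in> S" for i j k
  proof -
    obtain x y where xy: "x \<in> fixed_space b" "y \<in> fixed_space h" "axis i 1 = x + y"
      using split by blast
    have x1: "x $ j = \<beta> i * x $ i" using Fb[OF xy(1), of i] c by simp
    have x2: "x $ k = \<beta> j * x $ j" using Fb[OF xy(1), of j] c by simp
    have y1: "\<beta> i * y $ i = d j * y $ j" using Fh[OF xy(2), of i] c by simp
    have y2: "\<beta> j * y $ j = d k * y $ k" using Fh[OF xy(2), of j] c by simp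
    have s1: "x $ i + y $ i = 1" using arg_cong[OF xy(3), of "\<lambda>v. v $ i"] by (simp add: axis_def)
    have s2: "x $ j + y $ j = 0" using arg_cong[OF xy(3), of "\<lambda>v. v $ j"] c by (simp add: axis_def)
    have s3: "x $ k + y $ k = 0" using arg_cong[OF xy(3), of "\<lambda>v. v $ k"] c by (simp add: axis_def)
    have "\<beta> i * \<beta> i * \<beta> j * (1 - d k) = 0" by (rule alg3[OF x1 x2 y1 y2 s1 s2 s3])
    moreover have "d k \<noteq> 1" using c(5) by (simp add: S_def)
    then have "1 - d k \<noteq> 0" by simp
    then have "\<beta> i * \<beta> i * \<beta> j * (1 - d k) \<noteq> 0" using bnz[of i] bnz[of j] by simp
    ultimately show False by contradiction
  qed
  have pI: "(\<Prod>l\<in>I. d l) = zeta m ^ (\<Sum>l\<in>I. c l)" if "I \<subseteq> S" for I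
  proof -
    have "(\<Prod>l\<in>I. d l) = (\<Prod>l\<in>I. zeta m ^ c l)"
    proof (rule prod.cong[OF refl])
      fix l assume "l \<in> I"
      then have "g$l$l \<noteq> 1" using that unfolding S_def d_def by blast
      then show "d l = zeta m ^ c l" using hc unfolding d_def by blast
    qed
    then show ?thesis by (simp add: power_sum)
  qed
  have pU: "(\<Prod>l\<in>UNIV. d l) = (\<Prod>l\<in>S. d l)" by (rule prod_supp) (auto simp: S_def)
  have proper': "\<not> p dvd (\<Sum>i\<in>I. c i)" if "I \<noteq> {}" "I \<subset> S" for I
    using proper that by (simp add: S_def d_def)
  show False
  proof (cases "\<exists>i. \<sigma> i \<noteq> i")
    case True
    then obtain i where i: "\<sigma> i \<noteq> i" by blast
    define j where "j = \<sigma> i"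
    have iS: "i \<in> S" using outS i by blast
    show False
    proof (cases "\<sigma> j = i")
      case True
      have ji: "j \<noteq> i" using i j_def by simp
      have tc: "d i * d j = 1" using twocyc[of i j] True ji by (simp add: j_def)
      have jS: "j \<in> S" using outS[of j] True ji by auto
      have sub: "{i, j} \<subseteq> S" using iS jS by simp
      have "zeta m ^ (c i + c j) = 1" using pI[OF sub] tc ji by simp
      then have "m dvd c i + c j" using zeta_pow_eq1[OF m] by simp
      then have "p dvd (\<Sum>l\<in>{i,j}. c l)" using p(2) ji by (simp add: dvd_trans)
      then have "\<not> {i, j} \<subset> S" using proper'[of "{i,j}"] by auto
      then have SS: "S = {i, j}" using sub by blast
      have "codim g = 2" using codim_diag[OF dg] SS ji by (simp add: S_def d_def)
      moreover have "det g = 1"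
      proof -
        have "det g = (\<Prod>l\<in>UNIV. d l)" using det_diagonal[of g] dg
          unfolding diagonal_def d_def by blast
        then show ?thesis using pU SS ji tc by simp
      qed
      ultimately show False using ne by simp
    next
      case False
      define k where "k = \<sigma> j"
      have ki: "k \<noteq> i" using False k_def by simp
      have ji: "j \<noteq> i" using i j_def by simp
      have kS: "k \<in> S"
      proof (rule ccontr)
        assume "k \<notin> S"
        then have "\<sigma> k = k" using outS by blast
        then have "\<sigma> k = \<sigma> j" using k_def by simp
        then have "k = j" using inj by (simp add: inj_eq)
        then have "\<sigma> j = \<sigma> i" using k_def j_def by simp
        then show False using inj ji by (simp add: inj_eq)
      qed
      show False using nocyc3[of i j k] j_def ji k_def ki kS by simp
    qed
  next
    case False
    then have sid: "\<sigma> l = l" for l by blast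
    define T where "T = {l. \<beta> l \<noteq> 1}"
    have TS: "T \<subseteq> S" using outS by (auto simp: T_def)
    have Td: "\<beta> l = d l" if "l \<in> T" for l using fixpt[OF sid[of l]] that by (auto simp: T_def)
    have bid: "b = monom id \<beta>" using s(2) sid by (metis eq_id_iff)
    have "(\<Prod>l\<in>UNIV. \<beta> l) = (\<Prod>l\<in>T. \<beta> l)" by (rule prod_supp) (auto simp: T_def)
    also have "\<dots> = (\<Prod>l\<in>T. d l)" using Td by simp
    also have "\<dots> = zeta m ^ (\<Sum>l\<in>T. c l)" by (rule pI[OF TS])
    finally have "(zeta m ^ (\<Sum>l\<in>T. c l)) ^ (m div p) = 1" using s(4) by simp
    then have pT: "p dvd (\<Sum>l\<in>T. c l)" using zeta_p[OF m p] by simp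
    have Tne: "T \<noteq> {}"
    proof
      assume "T = {}"
      then have "\<beta> = (\<lambda>_. 1)" by (auto simp: T_def fun_eq_iff)
      then have "b = monom id (\<lambda>_. 1)" using bid by simp
      then have "b = mat 1" by (simp add: mat1_monom)
      then show False using b1 by contradiction
    qed
    have TnS: "T \<noteq> S"
    proof
      assume TS': "T = S"
      have "\<beta> = d"
      proof
        fix l show "\<beta> l = d l"
        proof (cases "l \<in> S")
          case True then show ?thesis using Td TS' by blast
        next
          case False then show ?thesis using outS[of l] by (simp add: S_def)
        qed
      qed
      then show False using bg bid gd by simp
    qed
    show False using proper'[OF Tne] TS TnS pT by blast
  qed
qed



lemma pconn_atom:
  assumes m: "0 < m" and p: "0 < p" "p dvd m"
    and gG: "g \<in> Gmpn m p" and pc: "p_connected m p (g::complex^'n^'n)"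
    and ne: "\<not> (codim g = 2 \<and> det g = 1)"
  shows "codim_atom (Gmpn m p) g"
proof -
  have dg: "diagonal g" and g1: "g \<noteq> mat 1" using pc unfolding p_connected_def by auto
  obtain c where hc: "\<forall>i\<in>{i. g$i$i \<noteq> 1}. g$i$i = zeta m ^ c i"
    and proper: "\<forall>I. I \<noteq> {} \<and> I \<subset> {i. g$i$i \<noteq> 1} \<longrightarrow> \<not> p dvd (\<Sum>i\<in>I. c i)"
    using pc unfolding p_connected_def Let_def by blast
  show ?thesis unfolding codim_atom_def
  proof (intro conjI ballI impI)
    show "g \<in> Gmpn m p" by fact
    show "g \<noteq> mat 1" by fact
    show "codim_le (mat 1) g" by (rule codim_le_1)
    fix b assume b: "b \<in> Gmpn m p" and le: "codim_le (mat 1) b \<and> codim_le b g"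
    show "b = mat 1 \<or> b = g"
    proof (rule ccontr)
      assume "\<not> (b = mat 1 \<or> b = g)"
      then show False using pconn_core[OF m p gG dg hc proper ne b] le by blast
    qed
  qed
qed

theorem mainTheorem7:
  fixes m p :: nat
  assumes "0 < m" and "0 < p" and "p dvd m"
  shows "{a :: complex^'n^'n. codim_atom (Gmpn m p) a} =
         {g \<in> Gmpn m p. reflection g} \<union>
         {g \<in> Gmpn m p. p_connected m p g \<and> \<not> (codim g = 2 \<and> det g = 1)}"
proof (rule set_eqI)
  fix a :: "complex^'n^'n"
  show "a \<in> {a. codim_atom (Gmpn m p) a} \<longleftrightarrow> a \<in> {g \<in> Gmpn m p. reflection g} \<union>
         {g \<in> Gmpn m p. p_connected m p g \<and> \<not> (codim g = 2 \<and> det g = 1)}"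
  proof
    assume "a \<in> {a. codim_atom (Gmpn m p) a}"
    then have at: "codim_atom (Gmpn m p) a" by simp
    then have "a \<in> Gmpn m p" unfolding codim_atom_def by blast
    then show "a \<in> {g \<in> Gmpn m p. reflection g} \<union>
         {g \<in> Gmpn m p. p_connected m p g \<and> \<not> (codim g = 2 \<and> det g = 1)}"
      using atom_sub[OF assms at] by blast
  next
    assume "a \<in> {g \<in> Gmpn m p. reflection g} \<union>
         {g \<in> Gmpn m p. p_connected m p g \<and> \<not> (codim g = 2 \<and> det g = 1)}"
    then consider "a \<in> Gmpn m p" "reflection a"
      | "a \<in> Gmpn m p" "p_connected m p a" "\<not> (codim a = 2 \<and> det a = 1)" by blast
    then show "a \<in> {a. codim_atom (Gmpn m p) a}"
    proof cases
      case 1 then show ?thesis using atom_codim1[OF _ assms(1) refl_codim1] by blast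
    next
      case 2 then show ?thesis using pconn_atom[OF assms] by blast
    qed
  qed
qed


end
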